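(* The hypergraph $K_{15}^{(3)}-I$ admits a decomposition into $50$ tight $9$-cycles.
   Context: $K_v^{(3)}$ denotes the complete $3$-uniform hypergraph on $v$ vertices. For $3\mid v$, $K_v^{(3)}-I$ is obtained from $K_v^{(3)}$ by deleting the edges of a $1$-factor $I$ (a set of $v/3$ pairwise disjoint triples covering all vertices). A (3-uniform tight) $k$-cycle is given by a cyclic sequence $v_1,\dots,v_k$ of $k$ distinct vertices, its edges being the triples $\{v_i,v_{i+1},v_{i+2}\}$ ($i=1,\dots,k$, indices mod $k$). A decomposition is a collection of cycles whose edge sets partition the edge set. *)

theory Defs
  imports Main
begin

definition complete3 :: "'a set \<Rightarrow> 'a set set" where
  "complete3 V = {e. e \<subseteq> V \<and> card e = 3}"

definition one_factor :: "'a set \<Rightarrow> 'a set set \<Rightarrow> bool" where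
  "one_factor V I \<longleftrightarrow> I \<subseteq> complete3 V \<and> \<Union> I = V \<and>
     (\<forall>e\<in>I. \<forall>f\<in>I. e \<noteq> f \<longrightarrow> e \<inter> f = {})"

(* tight 3-uniform k-cycle given by the cyclic vertex sequence c of length k *)
definition is_tight_cycle :: "nat \<Rightarrow> 'a list \<Rightarrow> bool" where
  "is_tight_cycle k c \<longleftrightarrow> length c = k \<and> distinct c"

definition cycle_edges :: "'a list \<Rightarrow> 'a set set" where
  "cycle_edges c = {{c ! i, c ! ((i + 1) mod length c), c ! ((i + 2) mod length c)} | i. i < length c}"

definition tight_cycle_decomposition :: "nat \<Rightarrow> 'a set set \<Rightarrow> 'a list list \<Rightarrow> bool" where
  "tight_cycle_decomposition k E D \<longleftrightarrow>
     (\<forall>c\<in>set D. is_tight_cycle k c) \<and>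
     (\<forall>i<length D. \<forall>j<length D. i \<noteq> j \<longrightarrow> cycle_edges (D ! i) \<inter> cycle_edges (D ! j) = {}) \<and>
     (\<Union>c\<in>set D. cycle_edges c) = E"

end

theory Submission
  imports Defs
begin

definition I0 :: "nat set set" where
  "I0 = {{0,1,2},{3,4,5},{6,7,8},{9,10,11},{12,13,14}}"

definition D0 :: "nat list list" where "D0 = [[0,2,3,7,1,14,5,11,6],
 [2,1,10,13,0,12,5,9,8],
 [0,5,3,8,10,6,2,13,1],
 [1,0,8,10,7,5,6,4,11],
 [0,11,8,10,4,13,14,6,12],
 [1,9,4,8,14,13,3,12,0],
 [0,3,7,9,1,8,5,11,13],
 [0,2,11,6,12,1,13,5,8],
 [0,2,14,4,6,12,5,1,10],
 [0,2,13,14,9,4,12,1,7],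
 [3,5,6,10,4,2,8,14,9],
 [5,4,13,1,3,0,8,12,11],
 [3,8,6,11,13,9,5,1,4],
 [4,3,11,13,10,8,9,7,14],
 [3,14,11,13,7,1,2,9,0],
 [4,12,7,11,2,1,6,0,3],
 [3,6,10,12,4,11,8,14,1],
 [3,5,14,9,0,4,1,8,11],
 [3,5,2,7,9,0,8,4,13],
 [3,5,1,2,12,7,0,4,10],
 [6,8,9,13,7,5,11,2,12],
 [8,7,1,4,6,3,11,0,14],
 [6,11,9,14,1,12,8,4,7],
 [7,6,14,1,13,11,12,10,2],
 [6,2,14,1,10,4,5,12,3],
 [7,0,10,14,5,4,9,3,6],
 [6,9,13,0,7,14,11,2,4],
 [6,8,2,12,3,7,4,11,14],
 [6,8,5,10,12,3,11,7,1],
 [6,8,4,5,0,10,3,7,13],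
 [9,11,12,1,10,8,14,5,0],
 [11,10,4,7,9,6,14,3,2],
 [9,14,12,2,4,0,11,7,10],
 [10,9,2,4,1,14,0,13,5],
 [9,5,2,4,13,7,8,0,6],
 [10,3,13,2,8,7,12,6,9],
 [9,12,1,3,10,2,14,5,7],
 [9,11,5,0,6,10,7,14,2],
 [9,11,8,13,0,6,14,10,4],
 [9,11,7,8,3,13,6,10,1],
 [12,14,0,4,13,11,2,8,3],
 [14,13,7,10,12,9,2,6,5],
 [12,2,0,5,7,3,14,10,13],
 [13,12,5,7,4,2,3,1,8],
 [12,8,5,7,1,10,11,3,9],
 [13,6,1,5,11,10,0,9,12],
 [12,0,4,6,13,5,2,8,10],
 [12,14,8,3,9,13,10,2,5],
 [12,14,11,1,3,9,2,13,7],
 [12,14,10,11,6,1,9,13,4]]"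

definition codes0 :: "nat list" where "codes0 = [13,140,138,16514,16418,18464,2144,2113,69,1030,9218,9217,12289,4129,4640,800,772,262,41,296,1288,1344,1092,8260,8198,8195,35,259,1281,1408,1184,224,112,2128,2066,2051,2305,3328,1296,9232,24592,24640,20544,4161,6145,530,784,16656,24832,24584,12296,4105,4099,515,137,648,642,770,290,2336,10272,10241,8201,2053,2116,6208,4162,12290,8226,8480,289,261,16389,16404,16464,4176,4192,4130,1058,1027,1029,8197,24580,25088,16912,4624,4114,4226,131,133,104,1120,1104,1044,276,16644,17152,16904,552,8240,8210,8202,11,265,4353,6400,6176,2096,328,2368,10304,10752,8736,546,50,26,280,2072,10248,11264,9472,1792,896,17024,16528,16408,18440,26624,10368,8322,134,518,517,521,16393,4240,6272,2180,2054,70,67,73,25,4120,1096,5184,5136,6160,2320,18688,16642,16394,74,16424,16928,16897,529,19,274,2306,2312,2088,44,164,644,641,769,273,8464,8216,8232,42,38,4102,4228,4225,145,1041,1048,1064,832,8960,8832,8352,2208,2084,6148,4164,4416,386,146,82,88,2120,2057,18433,16641,16768,2624,18944,16898,20482,4354,4368,400,208,2240,16576,16450,24578,10242,14336,7168,5124,1156,196,16452,16390,17410,1042,1072,4144,4136,4168,76,1153,17409,17440,16432,560,536,584,200,193,8768,8705,8321,16513,18560,18436,2068,84,592,324,4356,4108,4232,152,2192,18448,18496,16704,352,1312,5152,5128,6152,2184,2178,194,322,336,304,49,1057,1033,1160,8328,8384,8512,6656,6146,5122,1282,17664,16672,16417,545,2561,3088,1168,656,704,16960,16456,16396,2060,3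076,20992,20484,4116,21,2065,2177,3200,1664,17920,1540,532,22,16402,16387,24577,8225,9248,1568,548,52,8212,8336,8576,385,321,577,608,9224,8204,8452,388,4480,4288,4672,1600,1544,4610,4106,1034,1036,17412,16420,16544,672,4736,2592,2081,97,1089,1216,17536,16516,16900,2564,2816,10496,8449,8257,16449,17472,17424,1552,2576,2688,2432,392,8456,8264,9280,1090,1538,2562,20481,16401,8209,10256,10244,2308,268,4360,20488,24704,9344,5248,5632,4612,580,100,16480,24608,4101,37,161,168,16520,17416,25600,13312,12292,12320,4256,176,148,28,14,266,8450,12544,4384,416,162,1154,3074,3080,2568,4616,4864,8258,98,2082,3104,3073,1537,4609,12800,12352,4113,81,8272,8288,8228,292,1284,5376,5121,20736,16648,776,8712,9728,9220,1060,4132,20512,22528,18434,2058,522,524,8708,8324,12416,20608,21504,19456,3136,2114,578,8706,8720,12304,20496]"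

definition enc :: "nat set \<Rightarrow> nat" where "enc e = (\<Sum>x\<in>e. 2 ^ x)"

definition edges_list :: "'a list \<Rightarrow> 'a set list" where
  "edges_list c = map (\<lambda>i. {c ! i, c ! ((i + 1) mod length c), c ! ((i + 2) mod length c)}) [0..<length c]"

definition codes_list :: "nat list \<Rightarrow> nat list" where
  "codes_list c = map (\<lambda>i. 2 ^ (c ! i) + 2 ^ (c ! ((i + 1) mod length c)) + 2 ^ (c ! ((i + 2) mod length c))) [0..<length c]"

lemma codes_comp: "concat (map codes_list D0) = codes0"
  unfolding D0_def codes0_def codes_list_def by (simp add: upt_rec)

lemma codes_distinct: "distinct codes0"
  unfolding codes0_def by simp

lemma codes_avoid: "\<forall>x\<in>set codes0. x \<notin> enc ` I0"
  unfolding codes0_def I0_def by (simp add: enc_def)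

lemma codes_len: "length codes0 = 450"
  unfolding codes0_def by simp

lemma D0_props: "\<forall>c\<in>set D0. length c = 9 \<and> distinct c \<and> set c \<subseteq> {0..<15}"
  unfolding D0_def by simp

lemma D0_len: "length D0 = 50"
  unfolding D0_def by simp

lemma cycle_edges_list: "cycle_edges c = set (edges_list c)"
  unfolding cycle_edges_def edges_list_def by auto

lemma idx_distinct:
  fixes i n :: nat
  assumes "i < n" "3 \<le> n"
  shows "i \<noteq> (i + 1) mod n" "i \<noteq> (i + 2) mod n" "(i + 1) mod n \<noteq> (i + 2) mod n"
proof -
  show "i \<noteq> (i + 1) mod n"
    using assms by (cases "i + 1 = n") auto
  show "i \<noteq> (i + 2) mod n"
    using assms by (cases "i + 2 < n"; cases "i + 2 = n") (auto simp: mod_if)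
  show "(i + 1) mod n \<noteq> (i + 2) mod n"
    using assms by (cases "i + 2 < n"; cases "i + 2 = n") (auto simp: mod_if)
qed

lemma edge_vals_distinct:
  assumes "distinct c" "i < length c" "3 \<le> length c"
  shows "c ! i \<noteq> c ! ((i + 1) mod length c)" "c ! i \<noteq> c ! ((i + 2) mod length c)"
        "c ! ((i + 1) mod length c) \<noteq> c ! ((i + 2) mod length c)"
proof -
  have l: "(i + 1) mod length c < length c" "(i + 2) mod length c < length c" using assms by (auto intro!: mod_less_divisor)
  show "c ! i \<noteq> c ! ((i + 1) mod length c)" "c ! i \<noteq> c ! ((i + 2) mod length c)"
        "c ! ((i + 1) mod length c) \<noteq> c ! ((i + 2) mod length c)"
    using idx_distinct[OF assms(2,3)] l assms(2) nth_eq_iff_index_eq[OF assms(1)] by metis+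
qed

lemma enc_codes:
  assumes "distinct c" "3 \<le> length c"
  shows "map enc (edges_list c) = codes_list c"
proof -
  have "\<And>i. i < length c \<Longrightarrow> enc {c ! i, c ! ((i + 1) mod length c), c ! ((i + 2) mod length c)} =
    2 ^ (c ! i) + 2 ^ (c ! ((i + 1) mod length c)) + 2 ^ (c ! ((i + 2) mod length c))"
  proof -
    fix i assume i: "i < length c"
    note d = edge_vals_distinct[OF assms(1) i assms(2)]
    show "enc {c ! i, c ! ((i + 1) mod length c), c ! ((i + 2) mod length c)} =
      2 ^ (c ! i) + 2 ^ (c ! ((i + 1) mod length c)) + 2 ^ (c ! ((i + 2) mod length c))"
      using d by (simp add: enc_def)
  qed
  then show ?thesis unfolding edges_list_def codes_list_def by simp
qed

lemma edge_card:
  assumes "distinct c" "3 \<le> length c" "e \<in> set (edges_list c)"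
  shows "card e = 3" "e \<subseteq> set c"
proof -
  from assms(3) obtain i where i: "i < length c"
    and e: "e = {c ! i, c ! ((i + 1) mod length c), c ! ((i + 2) mod length c)}"
    unfolding edges_list_def by auto
  note d = edge_vals_distinct[OF assms(1) i assms(2)]
  show "card e = 3" using d e by simp
  have "length c > 0" using i by (cases c) auto
  then show "e \<subseteq> set c" using e i by (auto intro!: nth_mem)
qed

lemma distinct_concat_nth:
  assumes "distinct (concat xss)" "i < length xss" "j < length xss" "i \<noteq> j"
  shows "set (xss ! i) \<inter> set (xss ! j) = {}"
  using assms
proof (induction xss arbitrary: i j)
  case Nil then show ?case by simp
next
  case (Cons x xs)
  show ?case
  proof (cases i)
    case 0
    then obtain j' where j: "j = Suc j'" "j' < length xs" using Cons.prems by (cases j) auto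
    have "set (xs ! j') \<subseteq> set (concat xs)" using nth_mem[OF j(2)] by auto
    then show ?thesis using Cons.prems(1) 0 j by auto
  next
    case (Suc i')
    show ?thesis
    proof (cases j)
      case 0
      have "i' < length xs" using Suc Cons.prems by auto
      then have "set (xs ! i') \<subseteq> set (concat xs)" using nth_mem by auto
      then show ?thesis using Cons.prems(1) 0 Suc by auto
    next
      case (Suc j')
      then show ?thesis using Cons.IH[of i' j'] Cons.prems \<open>i = Suc i'\<close> by auto
    qed
  qed
qed

lemma edges_list_map: "edges_list (map g c) = map (image g) (edges_list c)"
proof -
  have "\<And>i. i < length c \<Longrightarrow> {map g c ! i, map g c ! ((i + 1) mod length c), map g c ! ((i + 2) mod length c)}
     = g ` {c ! i, c ! ((i + 1) mod length c), c ! ((i + 2) mod length c)}"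
  proof -
    fix i assume i: "i < length c"
    then have "0 < length c" by (cases c) auto
    then have "(i + 1) mod length c < length c" "(i + 2) mod length c < length c" by simp_all
    then show "{map g c ! i, map g c ! ((i + 1) mod length c), map g c ! ((i + 2) mod length c)}
     = g ` {c ! i, c ! ((i + 1) mod length c), c ! ((i + 2) mod length c)}" using i by simp
  qed
  then show ?thesis unfolding edges_list_def by simp
qed

lemma cycle_edges_map:
  "cycle_edges (map g c) = image g ` cycle_edges c"
  by (simp add: cycle_edges_list edges_list_map)

lemma cycle_edges_sub:
  assumes "set c \<subseteq> V" shows "cycle_edges c \<subseteq> Pow V"
proof
  fix e assume "e \<in> cycle_edges c"
  then obtain i where i: "i < length c"
    and e: "e = {c ! i, c ! ((i + 1) mod length c), c ! ((i + 2) mod length c)}"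
    unfolding cycle_edges_def by auto
  then have "0 < length c" by (cases c) auto
  then have "(i + 1) mod length c < length c" "(i + 2) mod length c < length c" by simp_all
  then show "e \<in> Pow V" using e i assms nth_mem by (simp add: subset_iff)
qed

lemma transfer:
  assumes inj: "inj_on g V" and sub: "\<forall>c\<in>set D. set c \<subseteq> V"
    and dec: "tight_cycle_decomposition k E D"
  shows "tight_cycle_decomposition k (image g ` E) (map (map g) D)"
proof -
  have injP: "inj_on (image g) (Pow V)" using inj by (rule inj_on_image_Pow)
  show ?thesis unfolding tight_cycle_decomposition_def
  proof (intro conjI allI impI ballI)
    fix c' assume "c' \<in> set (map (map g) D)"
    then obtain c where c: "c \<in> set D" "c' = map g c" by auto
    then have "is_tight_cycle k c" using dec unfolding tight_cycle_decomposition_def by auto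
    moreover have "inj_on g (set c)" using inj sub c(1) by (auto intro: inj_on_subset)
    ultimately show "is_tight_cycle k c'" using c unfolding is_tight_cycle_def
      by (simp add: distinct_map)
  next
    fix i j assume ij: "i < length (map (map g) D)" "j < length (map (map g) D)" "i \<noteq> j"
    have si: "cycle_edges (D ! i) \<subseteq> Pow V" "cycle_edges (D ! j) \<subseteq> Pow V"
      using sub ij by (auto intro!: cycle_edges_sub)
    have "cycle_edges (D ! i) \<inter> cycle_edges (D ! j) = {}"
      using dec ij unfolding tight_cycle_decomposition_def by auto
    then show "cycle_edges (map (map g) D ! i) \<inter> cycle_edges (map (map g) D ! j) = {}"
      using ij inj_on_image_Int[OF injP si] by (simp add: cycle_edges_map)
  next
    have "(\<Union>c\<in>set D. cycle_edges c) = E" using dec unfolding tight_cycle_decomposition_def by auto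
    then show "(\<Union>c\<in>set (map (map g) D). cycle_edges c) = image g ` E"
      by (auto simp: cycle_edges_map)
  qed
qed

lemma complete3_image:
  assumes inj: "inj_on g V" and im: "g ` V = V" and fin: "finite V"
  shows "image g ` complete3 V = complete3 V"
proof -
  have injP: "inj_on (image g) (Pow V)" using inj by (rule inj_on_image_Pow)
  have c3: "complete3 V \<subseteq> Pow V" unfolding complete3_def by auto
  have finc: "finite (complete3 V)" using fin c3 finite_subset by blast
  have "image g ` complete3 V \<subseteq> complete3 V"
  proof
    fix x assume "x \<in> image g ` complete3 V"
    then obtain e where e: "e \<subseteq> V" "card e = 3" "x = g ` e" unfolding complete3_def by auto
    have "card x = 3" using e card_image[OF inj_on_subset[OF inj e(1)]] by simp
    then show "x \<in> complete3 V" using e im unfolding complete3_def by auto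
  qed
  moreover have "card (image g ` complete3 V) = card (complete3 V)"
    using card_image[OF inj_on_subset[OF injP c3]] .
  ultimately show ?thesis using card_subset_eq[OF finc] by blast
qed


lemma factor_map:
  assumes of: "one_factor {0..<15::nat} I"
  shows "\<exists>g. inj_on g {0..<15} \<and> g ` {0..<15} = {0..<15} \<and> image g ` I0 = I"
proof -
  have Isub: "I \<subseteq> complete3 {0..<15}" and U: "\<Union>I = {0..<15}"
    and dis: "\<forall>e\<in>I. \<forall>f\<in>I. e \<noteq> f \<longrightarrow> e \<inter> f = {}"
    using of unfolding one_factor_def by auto
  have c3: "\<And>e. e \<in> I \<Longrightarrow> card e = 3 \<and> e \<subseteq> {0..<15}" using Isub unfolding complete3_def by auto
  have "I \<subseteq> Pow {0..<15}" using c3 by auto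
  then have finI: "finite I" by (meson finite_Pow_iff finite_atLeastLessThan finite_subset)
  have "pairwise disjnt I" using dis unfolding pairwise_def disjnt_def by blast
  moreover have "\<And>A. A \<in> I \<Longrightarrow> finite A" using c3 by (meson finite_atLeastLessThan finite_subset)
  ultimately have "card (\<Union>I) = sum card I" by (rule card_Union_disjoint)
  also have "\<dots> = sum (\<lambda>_. 3) I" using c3 by (intro sum.cong) auto
  also have "\<dots> = 3 * card I" by simp
  finally have "3 * card I = card {0..<15::nat}" using U by simp
  then have "card I = 5" by simp
  obtain Bs where Bs: "set Bs = I" "distinct Bs" using finite_distinct_list[OF finI] by blast
  then have "length Bs = 5" using \<open>card I = 5\<close> by (metis distinct_card)
  then obtain B1 B2 B3 B4 B5 where B: "Bs = [B1, B2, B3, B4, B5]"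
    by (auto simp: numeral_eq_Suc length_Suc_conv)
  have inI: "B1 \<in> I" "B2 \<in> I" "B3 \<in> I" "B4 \<in> I" "B5 \<in> I"
    using Bs(1) unfolding B by auto
  have "card B1 = 3" "card B2 = 3" "card B3 = 3" "card B4 = 3" "card B5 = 3"
    using c3 inI by blast+
  note cB = this
  obtain a1 b1 c1 where e1: "B1 = {a1,b1,c1}" using cB(1) card_3_iff by metis
  obtain a2 b2 c2 where e2: "B2 = {a2,b2,c2}" using cB(2) card_3_iff by metis
  obtain a3 b3 c3 where e3: "B3 = {a3,b3,c3}" using cB(3) card_3_iff by metis
  obtain a4 b4 c4 where e4: "B4 = {a4,b4,c4}" using cB(4) card_3_iff by metis
  obtain a5 b5 c5 where e5: "B5 = {a5,b5,c5}" using cB(5) card_3_iff by metis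
  note e = e1 e2 e3 e4 e5
  define L where "L = [a1,b1,c1,a2,b2,c2,a3,b3,c3,a4,b4,c4,a5,b5,c5]"
  have "set L = B1 \<union> B2 \<union> B3 \<union> B4 \<union> B5" unfolding L_def e by auto
  moreover have "\<Union>I = B1 \<union> B2 \<union> B3 \<union> B4 \<union> B5" using Bs(1) unfolding B by auto
  ultimately have sL: "set L = {0..<15}" using U by simp
  have lL: "length L = 15" unfolding L_def by simp
  have "card (set L) = length L" using sL lL by simp
  then have dL: "distinct L" by (rule card_distinct)
  have inj: "inj_on (nth L) {0..<15}" using lL by (intro inj_on_nth[OF dL]) simp
  have "nth L ` {0..<length L} = set L" by (auto simp: in_set_conv_nth)
  then have im: "nth L ` {0..<15} = {0..<15}" using sL lL by simp
  have "image (nth L) ` I0 = set Bs" unfolding I0_def B e L_def by simp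
  then show ?thesis using inj im Bs by blast
qed


lemma D0_dec: "tight_cycle_decomposition 9 (complete3 {0..<15} - I0) D0"
proof -
  define L where "L = concat (map edges_list D0)"
  have cyc: "\<And>c. c \<in> set D0 \<Longrightarrow> length c = 9 \<and> distinct c \<and> set c \<subseteq> {0..<15}"
    using D0_props by blast
  have "map enc L = concat (map (\<lambda>c. map enc (edges_list c)) D0)"
    unfolding L_def by (simp add: map_concat comp_def)
  also have "\<dots> = concat (map codes_list D0)"
    using cyc enc_codes by (intro arg_cong[where f=concat] map_cong) auto
  also have "\<dots> = codes0" by (rule codes_comp)
  finally have mL: "map enc L = codes0" .
  then have dL: "distinct L" using codes_distinct distinct_map by metis
  have "length L = length codes0" using mL by (metis length_map)
  then have lL: "length L = 450" using codes_len by simp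
  have sL: "(\<Union>c\<in>set D0. cycle_edges c) = set L" unfolding L_def by (simp add: cycle_edges_list)
  have subL: "set L \<subseteq> complete3 {0..<15} - I0"
  proof
    fix e assume e: "e \<in> set L"
    then obtain c where c: "c \<in> set D0" "e \<in> set (edges_list c)" unfolding L_def by auto
    have "card e = 3" "e \<subseteq> set c" using edge_card[of c e] cyc[OF c(1)] c(2) by auto
    then have "e \<in> complete3 {0..<15}" using cyc[OF c(1)] unfolding complete3_def by auto
    moreover have "enc e \<in> set codes0" using e mL by (metis image_eqI list.set_map)
    then have "e \<notin> I0" using codes_avoid by blast
    ultimately show "e \<in> complete3 {0..<15} - I0" by blast
  qed
  have fin3: "finite (complete3 {0..<15::nat})" unfolding complete3_def
    by (rule finite_subset[of _ "Pow {0..<15}"]) auto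
  have "card (complete3 {0..<15::nat}) = 15 choose 3"
    unfolding complete3_def using n_subsets[of "{0..<15::nat}" 3] by simp
  also have "\<dots> = 455" by code_simp
  finally have c455: "card (complete3 {0..<15::nat}) = 455" .
  have I0sub: "I0 \<subseteq> complete3 {0..<15}" unfolding I0_def complete3_def by auto
  have "enc ` I0 = {7, 56, 448, 3584, 28672}" unfolding I0_def by (simp add: enc_def)
  then have "5 \<le> card I0" using card_image_le[of I0 enc] unfolding I0_def by simp
  moreover have "card (complete3 {0..<15} - I0) = 455 - card I0"
    using card_Diff_subset[OF finite_subset[OF I0sub fin3] I0sub] c455 by simp
  ultimately have "card (complete3 {0..<15} - I0) \<le> card (set L)"
    using distinct_card[OF dL] lL by simp
  then have eq: "set L = complete3 {0..<15} - I0"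
    using card_seteq[OF _ subL] fin3 by blast
  show ?thesis unfolding tight_cycle_decomposition_def
  proof (intro conjI allI impI ballI)
    fix c assume "c \<in> set D0" then show "is_tight_cycle 9 c" using cyc unfolding is_tight_cycle_def by blast
  next
    fix i j assume ij: "i < length D0" "j < length D0" "i \<noteq> j"
    have "set (map edges_list D0 ! i) \<inter> set (map edges_list D0 ! j) = {}"
      using distinct_concat_nth[of "map edges_list D0" i j] dL ij unfolding L_def by simp
    then show "cycle_edges (D0 ! i) \<inter> cycle_edges (D0 ! j) = {}"
      using ij by (simp add: cycle_edges_list)
  next
    show "(\<Union>c\<in>set D0. cycle_edges c) = complete3 {0..<15} - I0" using sL eq by simp
  qed
qed

theorem lemma13:
  fixes I :: "nat set set"
  assumes "one_factor {0..<15} I"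
  shows "\<exists>D. length D = 50 \<and>
           tight_cycle_decomposition 9 (complete3 {0..<15} - I) D"
proof -
  obtain g where g: "inj_on g {0..<15}" "g ` {0..<15} = {0..<15}" "image g ` I0 = I"
    using factor_map[OF assms] by blast
  have sub: "\<forall>c\<in>set D0. set c \<subseteq> {0..<15}" using D0_props by blast
  have "tight_cycle_decomposition 9 (image g ` (complete3 {0..<15} - I0)) (map (map g) D0)"
    using transfer[OF g(1) sub D0_dec] .
  moreover have "image g ` (complete3 {0..<15} - I0) = complete3 {0..<15} - I"
  proof -
    have injP: "inj_on (image g) (Pow {0..<15})" using g(1) by (rule inj_on_image_Pow)
    have I0sub: "I0 \<subseteq> Pow {0..<15}" unfolding I0_def by auto
    have "complete3 {0..<15::nat} - I0 \<subseteq> Pow {0..<15}" unfolding complete3_def by auto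
    then have "image g ` (complete3 {0..<15} - I0) = image g ` complete3 {0..<15} - image g ` I0"
      by (rule inj_on_image_set_diff[OF injP _ I0sub])
    also have "\<dots> = complete3 {0..<15} - I"
      using complete3_image[OF g(1) g(2) finite_atLeastLessThan] g(3) by (rule arg_cong2[where f=minus])
    finally show ?thesis .
  qed
  moreover have "length (map (map g) D0) = 50" using D0_len by simp
  ultimately show ?thesis by (intro exI[of _ "map (map g) D0"]) simp
qed

end
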